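(* Let $t$ be a positive integer, $n\ge 4t^2+10t$, and let $c\ge 3$ be an integer with $n\ge (t+1)c-1$. Then $$\lambda_1\big(D(K_{2t-1}\vee(K_{n-2t}+K_1))\big)<n+2\le \lambda_1\big(D(K_{tc-1}\vee(K_{n-(t+1)c+2}+(c-1)K_1))\big).$$
   Context: For a connected graph $G$, $D(G)$ is the distance matrix and $\lambda_1(D(G))$ its largest eigenvalue. $K_m$ is the complete graph, $+$ is disjoint union, $(c-1)K_1$ is $c-1$ isolated vertices, $\vee$ is the join (disjoint union plus all edges between the two parts). *)

theory Defs
  imports "Jordan_Normal_Form.Char_Poly"
begin

text \<open>A finite simple graph on the vertex set {0..<N}, given by the number N
  of vertices and an adjacency relation (only pairs of vertices below N matter).\<close>
type_synonym graph = "nat \<times> (nat \<Rightarrow> nat \<Rightarrow> bool)"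

definition gverts :: "graph \<Rightarrow> nat" where "gverts G = fst G"
definition gadj :: "graph \<Rightarrow> nat \<Rightarrow> nat \<Rightarrow> bool" where "gadj G = snd G"

definition complete_graph :: "nat \<Rightarrow> graph" where
  "complete_graph m = (m, \<lambda>i j. i < m \<and> j < m \<and> i \<noteq> j)"

definition empty_graph :: "nat \<Rightarrow> graph" where
  "empty_graph m = (m, \<lambda>i j. False)"

definition graph_union :: "graph \<Rightarrow> graph \<Rightarrow> graph" where
  "graph_union G H = (gverts G + gverts H, \<lambda>i j.
     (i < gverts G \<and> j < gverts G \<and> gadj G i j) \<or>
     (gverts G \<le> i \<and> gverts G \<le> j \<and> i < gverts G + gverts H \<and> j < gverts G + gverts H
        \<and> gadj H (i - gverts G) (j - gverts G)))"

definition graph_join :: "graph \<Rightarrow> graph \<Rightarrow> graph" where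
  "graph_join G H = (gverts G + gverts H, \<lambda>i j.
     gadj (graph_union G H) i j \<or>
     (i < gverts G \<and> gverts G \<le> j \<and> j < gverts G + gverts H) \<or>
     (j < gverts G \<and> gverts G \<le> i \<and> i < gverts G + gverts H))"

definition has_walk :: "graph \<Rightarrow> nat \<Rightarrow> nat \<Rightarrow> nat \<Rightarrow> bool" where
  "has_walk G k u v = (\<exists>p :: nat list. length p = k + 1 \<and> p ! 0 = u \<and> p ! k = v \<and>
      (\<forall>x \<in> set p. x < gverts G) \<and> (\<forall>i < k. gadj G (p ! i) (p ! Suc i)))"

definition graph_dist :: "graph \<Rightarrow> nat \<Rightarrow> nat \<Rightarrow> nat" where
  "graph_dist G u v = (LEAST k. has_walk G k u v)"

definition dist_matrix :: "graph \<Rightarrow> real mat" where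
  "dist_matrix G = mat (gverts G) (gverts G) (\<lambda>(i, j). real (graph_dist G i j))"

definition largest_eigenvalue :: "real mat \<Rightarrow> real" where
  "largest_eigenvalue A = Max {k. eigenvalue A k}"

end

theory Submission
  imports Defs "Jordan_Normal_Form.Spectral_Radius"
begin


lemma has_walk_0: "has_walk G 0 u v \<longleftrightarrow> u = v \<and> u < gverts G"
  unfolding has_walk_def
proof
  assume "\<exists>p. length p = 0 + 1 \<and> p ! 0 = u \<and> p ! 0 = v \<and> (\<forall>x\<in>set p. x < gverts G) \<and> (\<forall>i<0. gadj G (p ! i) (p ! Suc i))"
  then obtain p where "length p = 1" "p!0 = u" "p!0 = v" "\<forall>x\<in>set p. x < gverts G" by auto
  then show "u = v \<and> u < gverts G" by (cases p) auto
next
  assume "u = v \<and> u < gverts G"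
  then show "\<exists>p. length p = 0 + 1 \<and> p ! 0 = u \<and> p ! 0 = v \<and> (\<forall>x\<in>set p. x < gverts G) \<and> (\<forall>i<0. gadj G (p ! i) (p ! Suc i))"
    by (intro exI[of _ "[u]"]) auto
qed

lemma has_walk_1D: "has_walk G 1 u v \<Longrightarrow> gadj G u v"
  unfolding has_walk_def by force

lemma has_walk_1I: "u < gverts G \<Longrightarrow> v < gverts G \<Longrightarrow> gadj G u v \<Longrightarrow> has_walk G 1 u v"
  unfolding has_walk_def by (intro exI[of _ "[u,v]"]) auto

lemma has_walk_2I: "u < gverts G \<Longrightarrow> v < gverts G \<Longrightarrow> w < gverts G \<Longrightarrow> gadj G u w \<Longrightarrow> gadj G w v \<Longrightarrow> has_walk G 2 u v"
  unfolding has_walk_def by (intro exI[of _ "[u,w,v]"]) (auto simp: less_Suc_eq numeral_2_eq_2)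

lemma dist_self: "u < gverts G \<Longrightarrow> graph_dist G u u = 0"
  unfolding graph_dist_def by (rule Least_eq_0) (simp add: has_walk_0)

lemma dist_one: "u \<noteq> v \<Longrightarrow> u < gverts G \<Longrightarrow> v < gverts G \<Longrightarrow> gadj G u v \<Longrightarrow> graph_dist G u v = 1"
  unfolding graph_dist_def
proof (rule Least_equality)
  assume "u \<noteq> v" "u < gverts G" "v < gverts G" "gadj G u v"
  then show "has_walk G 1 u v" by (rule_tac has_walk_1I)
  fix y assume "has_walk G y u v"
  with \<open>u \<noteq> v\<close> show "1 \<le> y" by (cases y) (auto simp: has_walk_0)
qed

lemma dist_two: "u \<noteq> v \<Longrightarrow> u < gverts G \<Longrightarrow> v < gverts G \<Longrightarrow> \<not> gadj G u v \<Longrightarrow>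
   w < gverts G \<Longrightarrow> gadj G u w \<Longrightarrow> gadj G w v \<Longrightarrow> graph_dist G u v = 2"
  unfolding graph_dist_def
proof (rule Least_equality)
  assume "u \<noteq> v" "u < gverts G" "v < gverts G" "\<not> gadj G u v" "w < gverts G" "gadj G u w" "gadj G w v"
  then show "has_walk G 2 u v" by (rule_tac has_walk_2I)
  fix y assume h: "has_walk G y u v"
  show "2 \<le> y"
  proof (rule ccontr)
    assume "\<not> 2 \<le> y"
    then have "y = 0 \<or> y = 1" by auto
    then show False
    proof
      assume "y = 0" then show False using h \<open>u \<noteq> v\<close> by (simp add: has_walk_0)
    next
      assume "y = 1" then show False using h has_walk_1D \<open>\<not> gadj G u v\<close> by blast
    qed
  qed
qed

definition pt :: "nat \<Rightarrow> nat \<Rightarrow> nat \<Rightarrow> nat" where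
  "pt P Q j = (if j < P then 0 else if j < P + Q then 1 else 2)"

definition dl :: "nat \<Rightarrow> nat \<Rightarrow> real" where
  "dl x y = (if x = 0 \<or> y = 0 then 1 else if x = 1 \<and> y = 1 then 1 else 2)"

lemma graph_entry:
  fixes H :: graph and P Q :: nat
  assumes H: "\<And>i j. \<not> gadj H i j" and P: "P \<ge> 1"
  defines "G \<equiv> graph_join (complete_graph P) (graph_union (complete_graph Q) H)"
  assumes i: "i < P + Q + gverts H" and j: "j < P + Q + gverts H"
  shows "real (graph_dist G i j) = (if i = j then 0 else dl (pt P Q i) (pt P Q j))"
proof -
  have gv: "gverts G = P + Q + gverts H"
    unfolding G_def graph_join_def graph_union_def gverts_def complete_graph_def by simp
  have adj: "gadj G a b \<longleftrightarrow> a \<noteq> b \<and> (a < P \<or> b < P \<or> (a < P + Q \<and> b < P + Q))"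
    if "a < P + Q + gverts H" "b < P + Q + gverts H" for a b
    using that H unfolding G_def graph_join_def graph_union_def gadj_def gverts_def complete_graph_def
    by auto
  show ?thesis
  proof (cases "i = j")
    case True then show ?thesis using i gv by (simp add: dist_self)
  next
    case False
    show ?thesis
    proof (cases "gadj G i j")
      case True
      then show ?thesis using False i j gv adj[OF i j] by (auto simp add: dist_one dl_def pt_def)
    next
      case nadj: False
      have "graph_dist G i j = 2"
        apply (rule dist_two[where w=0])
        using False i j gv nadj adj[OF i j] adj[of i 0] adj[of 0 j] P by auto
      then show ?thesis using False nadj adj[OF i j] by (auto simp: dl_def pt_def)
    qed
  qed
qed



lemma sum_parts:
  fixes F :: "nat \<Rightarrow> real"
  assumes "P + Q \<le> N"
  shows "(\<Sum>j\<in>{0..<N}. F (pt P Q j)) = real P * F 0 + real Q * F 1 + real (N - P - Q) * F 2"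
proof -
  have 1: "(\<Sum>j\<in>{0..<P}. F (pt P Q j)) = (\<Sum>j\<in>{0..<P}. F 0)" by (rule sum.cong) (auto simp: pt_def)
  have 2: "(\<Sum>j\<in>{P..<P+Q}. F (pt P Q j)) = (\<Sum>j\<in>{P..<P+Q}. F 1)" by (rule sum.cong) (auto simp: pt_def)
  have 3: "(\<Sum>j\<in>{P+Q..<N}. F (pt P Q j)) = (\<Sum>j\<in>{P+Q..<N}. F 2)" by (rule sum.cong) (auto simp: pt_def)
  have "(\<Sum>j\<in>{0..<N}. F (pt P Q j)) = (\<Sum>j\<in>{0..<P}. F (pt P Q j)) + (\<Sum>j\<in>{P..<P+Q}. F (pt P Q j)) + (\<Sum>j\<in>{P+Q..<N}. F (pt P Q j))"
    using assms by (simp add: sum.atLeastLessThan_concat)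
  also have "\<dots> = real P * F 0 + real Q * F 1 + real (N - P - Q) * F 2"
    unfolding 1 2 3 using assms by (simp add: of_nat_diff)
  finally show ?thesis .
qed

lemma sum_del:
  fixes a b :: "nat \<Rightarrow> real"
  assumes "i < N"
  shows "(\<Sum>j\<in>{0..<N}. (if i = j then 0 else a j) * b j) = (\<Sum>j\<in>{0..<N}. a j * b j) - a i * b i"
proof -
  have "(\<Sum>j\<in>{0..<N}. (if i = j then 0 else a j) * b j) = (\<Sum>j\<in>{0..<N}. a j * b j - (if j = i then a j * b j else 0))"
    by (rule sum.cong) auto
  also have "\<dots> = (\<Sum>j\<in>{0..<N}. a j * b j) - a i * b i"
    using assms by (simp add: sum_subtractf sum.delta)
  finally show ?thesis .
qed

lemma row_sum:
  fixes \<delta> :: "nat \<Rightarrow> nat \<Rightarrow> real" and x :: "nat \<Rightarrow> real"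
  assumes "P + Q \<le> N" "i < N"
  shows "(\<Sum>j\<in>{0..<N}. (if i = j then 0 else \<delta> (pt P Q i) (pt P Q j)) * x (pt P Q j)) =
    real P * \<delta> (pt P Q i) 0 * x 0 + real Q * \<delta> (pt P Q i) 1 * x 1 + real (N-P-Q) * \<delta> (pt P Q i) 2 * x 2
     - \<delta> (pt P Q i) (pt P Q i) * x (pt P Q i)"
  using sum_parts[OF assms(1), of "\<lambda>k. \<delta> (pt P Q i) k * x k"] sum_del[OF assms(2), of "\<lambda>j. \<delta> (pt P Q i) (pt P Q j)" "\<lambda>j. x (pt P Q j)"]
  by (simp add: mult.assoc)

lemma mult_vec_entry:
  fixes A :: "real mat"
  assumes "A \<in> carrier_mat N N" "i < N" "v \<in> carrier_vec N"
  shows "(A *\<^sub>v v) $ i = (\<Sum>j\<in>{0..<N}. A $$ (i,j) * v $ j)"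
  using assms by (simp add: scalar_prod_def)

lemma ev_upper:
  fixes A :: "real mat" and w :: "nat \<Rightarrow> real"
  assumes A: "A \<in> carrier_mat N N" and nn: "\<And>i j. i<N \<Longrightarrow> j<N \<Longrightarrow> A$$(i,j) \<ge> 0"
  and w: "\<And>i. i<N \<Longrightarrow> w i > 0"
  and ineq: "\<And>i. i < N \<Longrightarrow> (\<Sum>j\<in>{0..<N}. A$$(i,j) * w j) < \<mu> * w i"
  and ev: "eigenvalue A k"
  shows "k < \<mu>"
proof -
  obtain v where v: "v \<in> carrier_vec N" "v \<noteq> 0\<^sub>v N" "A *\<^sub>v v = k \<cdot>\<^sub>v v"
    using ev A unfolding eigenvalue_def eigenvector_def by auto
  have "\<exists>i<N. v $ i \<noteq> 0"
  proof (rule ccontr)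
    assume "\<not> ?thesis"
    then have "v = 0\<^sub>v N" using v(1) by (intro eq_vecI) auto
    with v(2) show False by simp
  qed
  then obtain i1 where i1: "i1 < N" "v $ i1 \<noteq> 0" by auto
  define r where "r i = \<bar>v $ i\<bar> / w i" for i
  define m where "m = Max (r ` {0..<N})"
  have fin: "finite (r ` {0..<N})" and ne: "r ` {0..<N} \<noteq> {}" using i1 by auto
  have "m \<in> r ` {0..<N}" unfolding m_def using fin ne by (rule Max_in)
  then obtain i0 where i0: "i0 < N" "m = r i0" by auto
  have rle: "r i \<le> m" if "i < N" for i unfolding m_def using fin that by auto
  have "r i1 > 0" using i1 w[OF i1(1)] unfolding r_def by auto
  then have mpos: "m > 0" using rle[OF i1(1)] by linarith
  have vi0: "\<bar>v $ i0\<bar> = m * w i0" using w[OF i0(1)] i0 unfolding r_def by auto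
  have vj: "\<bar>v $ j\<bar> \<le> m * w j" if "j < N" for j
    using rle[OF that] w[OF that] unfolding r_def by (simp add: divide_le_eq)
  have "k * v $ i0 = (A *\<^sub>v v) $ i0" using v(3) v(1) i0 by simp
  also have "\<dots> = (\<Sum>j\<in>{0..<N}. A $$ (i0,j) * v $ j)" by (rule mult_vec_entry[OF A i0(1) v(1)])
  finally have eq: "k * v $ i0 = (\<Sum>j\<in>{0..<N}. A $$ (i0,j) * v $ j)" .
  have "\<bar>k\<bar> * \<bar>v $ i0\<bar> = \<bar>\<Sum>j\<in>{0..<N}. A $$ (i0,j) * v $ j\<bar>" using eq by (metis abs_mult)
  also have "\<dots> \<le> (\<Sum>j\<in>{0..<N}. \<bar>A $$ (i0,j) * v $ j\<bar>)" by (rule sum_abs)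
  also have "\<dots> \<le> (\<Sum>j\<in>{0..<N}. A $$ (i0,j) * (m * w j))"
  proof (rule sum_mono)
    fix j assume "j \<in> {0..<N}"
    then have j: "j < N" by auto
    show "\<bar>A $$ (i0,j) * v $ j\<bar> \<le> A $$ (i0,j) * (m * w j)"
      using nn[OF i0(1) j] vj[OF j] by (simp add: abs_mult mult_left_mono)
  qed
  also have "\<dots> = m * (\<Sum>j\<in>{0..<N}. A $$ (i0,j) * w j)" by (simp add: sum_distrib_left algebra_simps)
  also have "\<dots> < m * (\<mu> * w i0)" using ineq[OF i0(1)] mpos by simp
  also have "\<dots> = \<mu> * \<bar>v $ i0\<bar>" using vi0 by simp
  finally have "\<bar>k\<bar> * \<bar>v $ i0\<bar> < \<mu> * \<bar>v $ i0\<bar>" .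
  moreover have "\<bar>v $ i0\<bar> > 0" using vi0 mpos w[OF i0(1)] by simp
  ultimately have "\<bar>k\<bar> < \<mu>" by simp
  then show ?thesis by linarith
qed



definition gpoly :: "real \<Rightarrow> real \<Rightarrow> real \<Rightarrow> real" where
 "gpoly u t c = 3*u^2*c - 6*u^2 + 2*u*t*c^2 - 8*u*t*c - 2*u*c^2 + 19*u*c - 38*u - 3*t^2*c^2 - t*c^3 + 6*t*c^2 - 26*t*c - 7*c^2 + 30*c - 59"

lemma gpoly_shift: "gpoly u t c = gpoly U t c + (u - U) * (3*(c-2)*(u+U) + (2*t*c^2 - 8*t*c - 2*c^2 + 19*c - 38))"
  unfolding gpoly_def by (simp add: algebra_simps power2_eq_square power3_eq_cube power4_eq_xxxx)

lemma gpoly_nonneg: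
  fixes t c u :: real
  assumes t: "t \<ge> 1" and c: "c \<ge> 3" and uc: "u \<ge> c - 1" and ut: "u + t * c \<ge> 4*t^2 + 10*t"
   and cases: "c \<ge> 4*t+2 \<or> c \<le> 4*t+1"
  shows "gpoly u t c \<ge> 0"
  using cases
proof
  assume h: "c \<ge> 4*t+2"
  define s where "s = t - 1"
  define d where "d = c - 4*t - 2"
  have s: "s \<ge> 0" and d: "d \<ge> 0" using t h unfolding s_def d_def by auto
  have ht: "t = s + 1" and hc: "c = 4*s+6+d" unfolding s_def d_def by auto
  have 1: "gpoly (c - 1) t c = 16*s^4 + 24*s^3*d + 112*s^3 + 9*s^2*d^2 + 124*s^2*d + 268*s^2 + s*d^3 + 32*s*d^2 + 218*s*d + 252*s + 2*d^3 + 31*d^2 + 126*d + 45"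
    unfolding gpoly_def ht hc by (simp add: algebra_simps power2_eq_square power3_eq_cube power4_eq_xxxx)
  have 2: "2*(3*(c-2))*(c-1) + (2*t*c^2 - 8*t*c - 2*c^2 + 19*c - 38) = 32*s^3 + 16*s^2*d + 160*s^2 + 2*s*d^2 + 64*s*d + 284*s + 6*d^2 + 65*d + 148"
    unfolding ht hc by (simp add: algebra_simps power2_eq_square power3_eq_cube power4_eq_xxxx)
  have p1: "gpoly (c - 1) t c \<ge> 0" unfolding 1 using s d
    by (intro add_nonneg_nonneg mult_nonneg_nonneg zero_le_power) auto
  have p2: "2*(3*(c-2))*(c-1) + (2*t*c^2 - 8*t*c - 2*c^2 + 19*c - 38) \<ge> 0" unfolding 2 using s d
    by (intro add_nonneg_nonneg mult_nonneg_nonneg zero_le_power) auto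
  have "3*(c-2)*(u-(c-1)) \<ge> 0" using c uc by simp
  then have p3: "3*(c-2)*(u+(c-1)) + (2*t*c^2 - 8*t*c - 2*c^2 + 19*c - 38) \<ge> 0" using p2 by (simp add: algebra_simps)
  have "(u - (c-1)) * (3*(c-2)*(u+(c-1)) + (2*t*c^2 - 8*t*c - 2*c^2 + 19*c - 38)) \<ge> 0"
    using p3 uc by simp
  then show ?thesis using p1 gpoly_shift[of u t c "c-1"] by linarith
next
  assume h: "c \<le> 4*t+1"
  define s where "s = t - 1"
  define e where "e = c - 3"
  define w where "w = 4*s+2 - e"
  define U where "U = 4*t^2 + 10*t - t*c"
  have s: "s \<ge> 0" and e: "e \<ge> 0" and w: "w \<ge> 0" using t h c unfolding s_def e_def w_def by auto
  have ht: "t = s + 1" and hc: "c = e+3" unfolding s_def e_def by auto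
  have hw: "w = 4*s+2-e" by (rule w_def)
  have 1: "gpoly U t c = e*((32*s^3 + 217*s^2 + 393*s + 210) + (8*s^3 + 60*s^2 + 124*s + 79)*w + (s^2 + 3*s + 2)*w^2) + (48*s^4 + 336*s^3 + 802*s^2 + 744*s + 198)"
    unfolding gpoly_def U_def ht hc hw by (simp add: algebra_simps power2_eq_square power3_eq_cube power4_eq_xxxx)
  have 2: "2*(3*(c-2))*U + (2*t*c^2 - 8*t*c - 2*c^2 + 19*c - 38) = e*(8*s^2+56*s+59 + w*(4*s+6)) + (24*s^2+84*s+61)"
    unfolding U_def ht hc hw by (simp add: algebra_simps power2_eq_square power3_eq_cube power4_eq_xxxx)
  have p1: "gpoly U t c \<ge> 0" unfolding 1 using s e w
    by (intro add_nonneg_nonneg mult_nonneg_nonneg zero_le_power) auto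
  have p2: "2*(3*(c-2))*U + (2*t*c^2 - 8*t*c - 2*c^2 + 19*c - 38) \<ge> 0" unfolding 2 using s e w
    by (intro add_nonneg_nonneg mult_nonneg_nonneg zero_le_power) auto
  have uU: "u \<ge> U" using ut unfolding U_def by simp
  have "3*(c-2)*(u-U) \<ge> 0" using c uU by simp
  then have p3: "3*(c-2)*(u+U) + (2*t*c^2 - 8*t*c - 2*c^2 + 19*c - 38) \<ge> 0" using p2 by (simp add: algebra_simps)
  have "(u - U) * (3*(c-2)*(u+U) + (2*t*c^2 - 8*t*c - 2*c^2 + 19*c - 38)) \<ge> 0"
    using p3 uU by simp
  then show ?thesis using p1 gpoly_shift[of u t c U] by linarith
qed



lemma graph_dm:
  fixes H :: graph and P Q :: nat
  assumes H: "\<And>i j. \<not> gadj H i j" and P: "P \<ge> 1"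
  shows "dist_matrix (graph_join (complete_graph P) (graph_union (complete_graph Q) H))
           \<in> carrier_mat (P+Q+gverts H) (P+Q+gverts H)"
   and "\<And>i j. i < P+Q+gverts H \<Longrightarrow> j < P+Q+gverts H \<Longrightarrow>
        dist_matrix (graph_join (complete_graph P) (graph_union (complete_graph Q) H)) $$ (i,j)
          = (if i = j then 0 else dl (pt P Q i) (pt P Q j))"
proof -
  have gv: "gverts (graph_join (complete_graph P) (graph_union (complete_graph Q) H)) = P + Q + gverts H"
    unfolding graph_join_def graph_union_def gverts_def complete_graph_def by simp
  show "dist_matrix (graph_join (complete_graph P) (graph_union (complete_graph Q) H))
           \<in> carrier_mat (P+Q+gverts H) (P+Q+gverts H)"
    unfolding dist_matrix_def gv by simp
  fix i j assume "i < P+Q+gverts H" "j < P+Q+gverts H"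
  then show "dist_matrix (graph_join (complete_graph P) (graph_union (complete_graph Q) H)) $$ (i,j)
          = (if i = j then 0 else dl (pt P Q i) (pt P Q j))"
    unfolding dist_matrix_def gv using graph_entry[OF H P, of i Q j] by simp
qed

lemma dm_sum:
  fixes D :: "real mat" and x :: "nat \<Rightarrow> real"
  assumes ent: "\<And>i j. i<N \<Longrightarrow> j<N \<Longrightarrow> D $$ (i,j) = (if i = j then 0 else dl (pt P Q i) (pt P Q j))"
  and PQ: "P + Q \<le> N" and i: "i < N"
  shows "(\<Sum>j\<in>{0..<N}. D $$ (i,j) * x (pt P Q j)) = real P * dl (pt P Q i) 0 * x 0 + real Q * dl (pt P Q i) 1 * x 1
      + real (N-P-Q) * dl (pt P Q i) 2 * x 2 - dl (pt P Q i) (pt P Q i) * x (pt P Q i)"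
proof -
  have "(\<Sum>j\<in>{0..<N}. D $$ (i,j) * x (pt P Q j)) = (\<Sum>j\<in>{0..<N}. (if i = j then 0 else dl (pt P Q i) (pt P Q j)) * x (pt P Q j))"
    by (rule sum.cong) (use ent i in auto)
  also note row_sum[OF PQ i]
  finally show ?thesis .
qed

lemma dm_vec:
  fixes D :: "real mat" and x :: "nat \<Rightarrow> real"
  assumes car: "D \<in> carrier_mat N N"
  and ent: "\<And>i j. i<N \<Longrightarrow> j<N \<Longrightarrow> D $$ (i,j) = (if i = j then 0 else dl (pt P Q i) (pt P Q j))"
  and PQ: "P + Q \<le> N" and i: "i < N"
  shows "(D *\<^sub>v vec N (\<lambda>j. x (pt P Q j))) $ i = real P * dl (pt P Q i) 0 * x 0 + real Q * dl (pt P Q i) 1 * x 1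
      + real (N-P-Q) * dl (pt P Q i) 2 * x 2 - dl (pt P Q i) (pt P Q i) * x (pt P Q i)"
proof -
  have "(D *\<^sub>v vec N (\<lambda>j. x (pt P Q j))) $ i = (\<Sum>j\<in>{0..<N}. D $$ (i,j) * vec N (\<lambda>j. x (pt P Q j)) $ j)"
    by (rule mult_vec_entry[OF car i]) simp
  also have "\<dots> = (\<Sum>j\<in>{0..<N}. D $$ (i,j) * x (pt P Q j))" by (rule sum.cong) auto
  also note dm_sum[OF ent PQ i]
  finally show ?thesis .
qed

lemma pt_cases: "pt P Q i = 0 \<or> pt P Q i = 1 \<or> pt P Q i = 2" by (simp add: pt_def)

lemma dl_simps[simp]: "dl 0 k = 1" "dl k 0 = 1" "dl 1 1 = 1" "dl 1 2 = 2" "dl 2 1 = 2" "dl 2 2 = 2"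
  by (auto simp: dl_def)

lemma dl_nonneg: "dl a b \<ge> 0" by (simp add: dl_def)

definition phi :: "real \<Rightarrow> real \<Rightarrow> real \<Rightarrow> real \<Rightarrow> real" where
  "phi p q r l = p*(r*(l+q+1)) + 2*q*(r*(2*l-p+2)) + (2*(r-1) - l)*((l-p+1)*(l-q+1) - q*p)"

lemma phi_big:
  fixes p q r n :: real
  assumes "p \<ge> 0" "q \<ge> 0" "r \<ge> 0" "p + q + r = n" "n \<ge> 1"
  shows "phi p q r (10*n) \<le> 0"
proof -
  define l where "l = 10*n"
  have b1: "(l-p+1)*(l-q+1) \<ge> (9*n)*(9*n)" by (rule mult_mono) (use assms in \<open>auto simp: l_def\<close>)
  have b2: "q*p \<le> n*n" by (rule mult_mono) (use assms in auto)
  have W: "(l-p+1)*(l-q+1) - q*p \<ge> 80*n*n" using b1 b2 by (simp add: algebra_simps)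
  have b3: "(l - 2*(r-1)) * ((l-p+1)*(l-q+1) - q*p) \<ge> (8*n)*(80*n*n)"
    by (rule mult_mono) (use assms W in \<open>auto simp: l_def\<close>)
  have a4: "r*(l+q+1) \<le> n*(12*n)" by (rule mult_mono) (use assms in \<open>auto simp: l_def\<close>)
  have b4: "p*(r*(l+q+1)) \<le> n*(n*(12*n))" by (rule mult_mono[OF _ a4]) (use assms in \<open>auto simp: l_def\<close>)
  have a5: "r*(2*l-p+2) \<le> n*(22*n)" by (rule mult_mono) (use assms in \<open>auto simp: l_def\<close>)
  have b5: "q*(r*(2*l-p+2)) \<le> n*(n*(22*n))" by (rule mult_mono[OF _ a5]) (use assms in \<open>auto simp: l_def\<close>)
  have e: "phi p q r l = p*(r*(l+q+1)) + 2*(q*(r*(2*l-p+2))) - (l - 2*(r-1)) * ((l-p+1)*(l-q+1) - q*p)"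
    unfolding phi_def by (simp add: algebra_simps)
  have c1: "(8*n)*(80*n*n) = 640*n^3" "n*(n*(12*n)) = 12*n^3" "n*(n*(22*n)) = 22*n^3"
    by (simp_all add: power3_eq_cube)
  have "n^3 \<ge> 0" using assms by simp
  then show ?thesis using e b3 b4 b5 c1 unfolding l_def by linarith
qed

lemma phi_cont: "continuous_on S (phi p q r)"
  unfolding phi_def by (intro continuous_intros)



lemma row_id1: "p * (r*(l+q+1)) + q*(r*(2*l-p+2)) + r*((l-p+1)*(l-q+1) - q*p) - r*(l+q+1) = l*(r*(l+q+1))"
  for p q r l :: real by (simp add: algebra_simps)
lemma row_id2: "p * (r*(l+q+1)) + q*(r*(2*l-p+2)) + r*2*((l-p+1)*(l-q+1) - q*p) - r*(2*l-p+2) = l*(r*(2*l-p+2))"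
  for p q r l :: real by (simp add: algebra_simps)
lemma row_id3: "phi p q r l = 0 \<Longrightarrow> p * (r*(l+q+1)) + q*2*(r*(2*l-p+2)) + r*2*((l-p+1)*(l-q+1) - q*p) - 2*((l-p+1)*(l-q+1) - q*p) = l*((l-p+1)*(l-q+1) - q*p)"
  for p q r l :: real unfolding phi_def by (simp add: algebra_simps)

theorem mainTheorem6:
  fixes t n c :: nat
  assumes "t \<ge> 1"
    and "n \<ge> 4 * t^2 + 10 * t"
    and "c \<ge> 3"
    and "n \<ge> (t + 1) * c - 1"
  shows "largest_eigenvalue (dist_matrix
            (graph_join (complete_graph (2 * t - 1))
                        (graph_union (complete_graph (n - 2 * t)) (complete_graph 1))))
           < real n + 2
       \<and> real n + 2 \<le> largest_eigenvalue (dist_matrix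
            (graph_join (complete_graph (t * c - 1))
                        (graph_union (complete_graph (n + 2 - (t + 1) * c)) (empty_graph (c - 1)))))"
proof -
  have t1: "t \<ge> 1" and nb: "n \<ge> 4*t^2+10*t" and c3: "c \<ge> 3" and nc: "n \<ge> (t+1)*c - 1" using assms by auto
  have tt: "t^2 \<ge> t" using t1 by (simp add: power2_eq_square)
  have n14: "n \<ge> 14*t" using nb tt by linarith
  define P1 where "P1 = 2*t - 1"
  define Q1 where "Q1 = n - 2*t"
  have H1: "\<And>i j. \<not> gadj (complete_graph 1) i j" by (auto simp: gadj_def complete_graph_def)
  have gv1: "gverts (complete_graph 1) = 1" by (simp add: gverts_def complete_graph_def)
  have P1: "P1 \<ge> 1" using t1 unfolding P1_def by simp
  have N1: "P1 + Q1 + gverts (complete_graph 1) = n" using n14 t1 unfolding P1_def Q1_def gv1 by simp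
  define D1 where "D1 = dist_matrix (graph_join (complete_graph P1) (graph_union (complete_graph Q1) (complete_graph 1)))"
  have D1c: "D1 \<in> carrier_mat n n" using graph_dm(1)[OF H1 P1, of Q1] N1 unfolding D1_def by simp
  have D1e: "\<And>i j. i < n \<Longrightarrow> j < n \<Longrightarrow> D1 $$ (i,j) = (if i = j then 0 else dl (pt P1 Q1 i) (pt P1 Q1 j))"
    using graph_dm(2)[OF H1 P1, of _ Q1] N1 unfolding D1_def by simp
  have rP1: "real P1 = 2*real t - 1" using t1 unfolding P1_def by (simp add: of_nat_diff)
  have rQ1: "real Q1 = real n - 2*real t" using n14 unfolding Q1_def by (simp add: of_nat_diff)
  have R1: "n - P1 - Q1 = 1" using N1 gv1 by simp
  have PQ1: "P1 + Q1 \<le> n" using N1 by simp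
  have fin1: "finite {k. eigenvalue D1 k}" using card_finite_spectrum(1)[OF D1c] unfolding spectrum_def by simp
  define a where "a = P1"
  define v1 where "v1 = vec n (\<lambda>j. if j = a then 1 else if j = a+1 then -1 else (0::real))"
  have a1: "a + 1 < n" "pt P1 Q1 a = 1" "pt P1 Q1 (a+1) = 1"
    using n14 t1 unfolding a_def pt_def P1_def Q1_def by auto
  have ev1: "eigenvalue D1 (-1)"
    unfolding eigenvalue_def eigenvector_def
  proof (intro exI conjI)
    show "v1 \<in> carrier_vec (dim_row D1)" using D1c unfolding v1_def by simp
    have "v1 $ a = 1" using a1 unfolding v1_def by simp
    then show "v1 \<noteq> 0\<^sub>v (dim_row D1)" using D1c a1 by auto
    show "D1 *\<^sub>v v1 = (-1) \<cdot>\<^sub>v v1"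
    proof (rule eq_vecI)
      fix i assume "i < dim_vec ((-1) \<cdot>\<^sub>v v1)"
      then have i: "i < n" unfolding v1_def by simp
      have "(D1 *\<^sub>v v1) $ i = (\<Sum>j\<in>{0..<n}. D1 $$ (i,j) * v1 $ j)" by (rule mult_vec_entry[OF D1c i]) (simp add: v1_def)
      also have "\<dots> = (\<Sum>j\<in>{0..<n}. (if j = a then D1 $$ (i,j) else 0) - (if j = a+1 then D1 $$ (i,j) else 0))"
        by (rule sum.cong) (auto simp: v1_def)
      also have "\<dots> = D1 $$ (i,a) - D1 $$ (i,a+1)" using a1 by (simp add: sum_subtractf sum.delta)
      also have "\<dots> = ((-1) \<cdot>\<^sub>v v1) $ i"
        using D1e[OF i, of a] D1e[OF i, of "a+1"] a1 i by (auto simp: v1_def dl_def)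
      finally show "(D1 *\<^sub>v v1) $ i = ((-1) \<cdot>\<^sub>v v1) $ i" .
    next
      show "dim_vec (D1 *\<^sub>v v1) = dim_vec ((-1) \<cdot>\<^sub>v v1)" using D1c by (simp add: v1_def)
    qed
  qed
  have ne1: "{k. eigenvalue D1 k} \<noteq> {}" using ev1 by auto
  have mx1: "eigenvalue D1 (largest_eigenvalue D1)" using Max_in[OF fin1 ne1] unfolding largest_eigenvalue_def by simp
  define x1 where "x1 = (\<lambda>k::nat. if k = 2 then 2*real n - 2*real t else real n + 2)"
  have up1: "largest_eigenvalue D1 < real n + 2"
  proof (rule ev_upper[OF D1c _ _ _ mx1, where w = "\<lambda>j. x1 (pt P1 Q1 j)"])
    fix i j assume "i < n" "j < n"
    then show "0 \<le> D1 $$ (i,j)" using D1e dl_nonneg by simp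
  next
    fix i assume "i < n"
    show "0 < x1 (pt P1 Q1 i)" using n14 t1 unfolding x1_def by auto
  next
    fix i assume i: "i < n"
    have e: "(\<Sum>j\<in>{0..<n}. D1 $$ (i,j) * x1 (pt P1 Q1 j)) = real P1 * dl (pt P1 Q1 i) 0 * x1 0 + real Q1 * dl (pt P1 Q1 i) 1 * x1 1
      + real (n-P1-Q1) * dl (pt P1 Q1 i) 2 * x1 2 - dl (pt P1 Q1 i) (pt P1 Q1 i) * x1 (pt P1 Q1 i)"
      by (rule dm_sum[OF D1e PQ1 i])
    have tn: "real t * 14 \<le> real n" using n14 by linarith
    show "(\<Sum>j\<in>{0..<n}. D1 $$ (i,j) * x1 (pt P1 Q1 j)) < (real n + 2) * x1 (pt P1 Q1 i)"
      unfolding e R1 using pt_cases[of P1 Q1 i] tn t1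
      by (auto simp: x1_def rP1 rQ1 dl_def algebra_simps)
  qed
  define X where "X = t*c"
  define P2 where "P2 = t*c - 1"
  define Q2 where "Q2 = n + 2 - (t+1)*c"
  define R2 where "R2 = c - 1"
  have tc: "X \<ge> 3" unfolding X_def using mult_mono[OF t1 c3] by simp
  have tc2: "(t+1)*c = X + c" unfolding X_def by (simp add: algebra_simps)
  have nc': "X + c \<le> n + 1" using nc unfolding tc2 by linarith
  have H2: "\<And>i j. \<not> gadj (empty_graph R2) i j" by (simp add: gadj_def empty_graph_def)
  have gv2: "gverts (empty_graph R2) = R2" by (simp add: gverts_def empty_graph_def)
  have P2: "P2 \<ge> 1" using tc unfolding P2_def X_def by simp
  have "P2 + Q2 + R2 = n" using nc' tc c3 unfolding P2_def Q2_def R2_def tc2 X_def[symmetric] by simp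
  then have N2: "P2 + Q2 + gverts (empty_graph R2) = n" using gv2 by simp
  have R2': "n - P2 - Q2 = R2" using N2 gv2 by simp
  have PQ2: "P2 + Q2 \<le> n" using N2 by simp
  define D2 where "D2 = dist_matrix (graph_join (complete_graph P2) (graph_union (complete_graph Q2) (empty_graph R2)))"
  have D2c: "D2 \<in> carrier_mat n n" using graph_dm(1)[OF H2 P2, of Q2] N2 unfolding D2_def by simp
  have D2e: "\<And>i j. i < n \<Longrightarrow> j < n \<Longrightarrow> D2 $$ (i,j) = (if i = j then 0 else dl (pt P2 Q2 i) (pt P2 Q2 j))"
    using graph_dm(2)[OF H2 P2, of _ Q2] N2 unfolding D2_def by simp
  have fin2: "finite {k. eigenvalue D2 k}" using card_finite_spectrum(1)[OF D2c] unfolding spectrum_def by simp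
  define p where "p = real P2"
  define q where "q = real Q2"
  define r where "r = real R2"
  have rP2: "p = real t * real c - 1"
  proof -
    have e: "t*c - 1 + 1 = t*c" using tc unfolding X_def by simp
    then have "real (t*c - 1) + 1 = real (t*c)" by (metis of_nat_1 of_nat_add)
    then show ?thesis unfolding p_def P2_def by simp
  qed
  have rQ2: "q = real n + 2 - (real t + 1) * real c" using nc' unfolding q_def Q2_def tc2
    by (simp add: of_nat_diff X_def algebra_simps)
  have rR2: "r = real c - 1" using c3 unfolding r_def R2_def by (simp add: of_nat_diff)
  have "real (P2 + Q2 + R2) = real n" using N2 gv2 by simp
  then have sum2: "p + q + r = real n" unfolding p_def q_def r_def by simp
  have g0: "phi p q r (real n + 2) \<ge> 0"
  proof -
    have "phi p q r (real n + 2) = gpoly (real n - real t * real c) (real t) (real c)"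
      unfolding phi_def gpoly_def rP2 rQ2 rR2 by (simp add: algebra_simps power2_eq_square power3_eq_cube)
    moreover have "gpoly (real n - real t * real c) (real t) (real c) \<ge> 0"
    proof (rule gpoly_nonneg)
      show "1 \<le> real t" using t1 by simp
      show "3 \<le> real c" using c3 by simp
      have "real X + real c \<le> real n + 1" using nc' by linarith
      then show "real c - 1 \<le> real n - real t * real c" unfolding X_def by simp
      have "real (4*t^2+10*t) \<le> real n" using nb by (simp only: of_nat_le_iff)
      then have "real n \<ge> 4 * real t ^2 + 10 * real t" by simp
      then show "4 * real t ^ 2 + 10 * real t \<le> real n - real t * real c + real t * real c" by simp
      have "c \<ge> 4*t+2 \<or> c \<le> 4*t+1" by linarith
      then show "4 * real t + 2 \<le> real c \<or> real c \<le> 4 * real t + 1" by linarith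
    qed
    ultimately show ?thesis by simp
  qed
  have g1: "phi p q r (10 * real n) \<le> 0"
    by (rule phi_big) (use sum2 n14 t1 in \<open>auto simp: p_def q_def r_def\<close>)
  obtain l where l: "real n + 2 \<le> l" "l \<le> 10 * real n" "phi p q r l = 0"
    using IVT2'[of "phi p q r" "10*real n" 0 "real n + 2", OF g1 g0 _ phi_cont] n14 t1 by auto
  define w1 where "w1 = r*(l+q+1)"
  define w2 where "w2 = r*(2*l-p+2)"
  define w3 where "w3 = (l-p+1)*(l-q+1) - q*p"
  define x2 where "x2 = (\<lambda>k::nat. if k = 0 then w1 else if k = 1 then w2 else w3)"
  define v2 where "v2 = vec n (\<lambda>j. x2 (pt P2 Q2 j))"
  have qn: "q \<ge> 0" "r \<ge> 2" using c3 unfolding q_def rR2 by auto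
  have w1p: "w1 > 0" unfolding w1_def using qn l(1) by (simp add: mult_pos_pos)
  have ev2: "eigenvalue D2 l"
    unfolding eigenvalue_def eigenvector_def
  proof (intro exI conjI)
    show "v2 \<in> carrier_vec (dim_row D2)" using D2c unfolding v2_def by simp
    have "v2 $ 0 = w1" using P2 N2 unfolding v2_def x2_def pt_def by auto
    then show "v2 \<noteq> 0\<^sub>v (dim_row D2)" using D2c w1p P2 N2 by auto
    show "D2 *\<^sub>v v2 = l \<cdot>\<^sub>v v2"
    proof (rule eq_vecI)
      fix i assume "i < dim_vec (l \<cdot>\<^sub>v v2)"
      then have i: "i < n" unfolding v2_def by simp
      have e: "(D2 *\<^sub>v v2) $ i = real P2 * dl (pt P2 Q2 i) 0 * x2 0 + real Q2 * dl (pt P2 Q2 i) 1 * x2 1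
      + real (n-P2-Q2) * dl (pt P2 Q2 i) 2 * x2 2 - dl (pt P2 Q2 i) (pt P2 Q2 i) * x2 (pt P2 Q2 i)"
        unfolding v2_def by (rule dm_vec[OF D2c D2e PQ2 i])
      have rhs: "(l \<cdot>\<^sub>v v2) $ i = l * x2 (pt P2 Q2 i)" using i unfolding v2_def by simp
      show "(D2 *\<^sub>v v2) $ i = (l \<cdot>\<^sub>v v2) $ i"
        unfolding e rhs R2' p_def[symmetric] q_def[symmetric] r_def[symmetric]
        using pt_cases[of P2 Q2 i] row_id1[of p r l q] row_id2[of p r l q] row_id3[OF l(3)]
        by (auto simp: x2_def w1_def w2_def w3_def dl_def algebra_simps)
    next
      show "dim_vec (D2 *\<^sub>v v2) = dim_vec (l \<cdot>\<^sub>v v2)" using D2c by (simp add: v2_def)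
    qed
  qed
  have lo2: "l \<le> largest_eigenvalue D2" unfolding largest_eigenvalue_def using fin2 ev2 by (simp add: Max_ge)
  show ?thesis using up1 lo2 l(1) unfolding D1_def D2_def P1_def Q1_def P2_def Q2_def R2_def by simp
qed

end
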